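(* Let $P\ll Q$ be probability measures on $(\mathcal X,\mathcal F)$, let $\gamma>1$, and let $f:(0,\infty)\to\mathbb R$ be convex with $f(1)=0$, differentiable at $1$ and $\gamma$, with $f'(\gamma)>f'(1)$. Then for every $E\in\mathcal F$, $$P(E)\le\gamma\,Q(E)+\frac{D_f(P\Vert Q)}{f'(\gamma)-f'(1)}.$$
   Context: For convex $f$ on $(0,\infty)$ extended by $f(0):=\lim_{t\downarrow0}f(t)$ and $P\ll Q$, $D_f(P\Vert Q):=\int f(\mathrm dP/\mathrm dQ)\,\mathrm dQ$. *)

theory Defs
  imports "HOL-Probability.Probability"
begin

text \<open>Extension of f from (0,inf) to [0,inf): for t > 0 the value f t, at 0 the
  (extended-real) right limit of f at 0, which exists for convex f and may be +inf.\<close>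
definition fext :: "(real \<Rightarrow> real) \<Rightarrow> real \<Rightarrow> ereal" where
  "fext f t = (if t > 0 then ereal (f t) else Lim (at_right 0) (\<lambda>s. ereal (f s)))"

definition fdiv :: "(real \<Rightarrow> real) \<Rightarrow> 'a measure \<Rightarrow> 'a measure \<Rightarrow> ereal" where
  "fdiv f P Q =
     (let g = (\<lambda>x. fext f (enn2real (RN_deriv Q P x)))
      in enn2ereal (\<integral>\<^sup>+ x. e2ennreal (g x) \<partial>Q) - enn2ereal (\<integral>\<^sup>+ x. e2ennreal (- g x) \<partial>Q))"

end

theory Submission
  imports Defs
begin

lemma tangent_pos:
  fixes f :: "real \<Rightarrow> real"
  assumes "convex_on {0<..} f" "c > 0" "(f has_real_derivative d) (at c)" "t > 0"
  shows "f t - f c \<ge> d * (t - c)"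
proof (rule convex_on_imp_above_tangent[OF assms(1)])
  show "connected {0::real<..}" by simp
  show "c \<in> interior {0<..}" using assms(2) by (simp add: interior_open)
  show "t \<in> {0<..}" using assms(4) by simp
  show "(f has_real_derivative d) (at c within {0<..})"
    using assms(3) by (rule has_field_derivative_at_within)
qed

lemma pointwise_bound:
  fixes f :: "real \<Rightarrow> real"
  assumes cv: "convex_on {0<..} f" and g1: "\<gamma> > 1" and f1: "f 1 = 0"
    and D1: "(f has_real_derivative d1) (at 1)"
    and Dg: "(f has_real_derivative d\<gamma>) (at \<gamma>)"
    and t: "t \<ge> 0"
  shows "fext f t \<ge> ereal (d1 * (t - 1) + (d\<gamma> - d1) * max 0 (t - \<gamma>))"
proof (cases "t > 0")
  case True
  have a: "f t \<ge> d1 * (t - 1)" using tangent_pos[OF cv _ D1 True] f1 by simp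
  have b: "f t - f \<gamma> \<ge> d\<gamma> * (t - \<gamma>)" using tangent_pos[OF cv _ Dg True] g1 by simp
  have c: "f \<gamma> \<ge> d1 * (\<gamma> - 1)" using tangent_pos[OF cv _ D1, of \<gamma>] f1 g1 by simp
  have "f t \<ge> d1 * (t - 1) + (d\<gamma> - d1) * max 0 (t - \<gamma>)"
  proof (cases "t \<ge> \<gamma>")
    case True
    then show ?thesis using b c by (simp add: algebra_simps)
  next
    case False
    then show ?thesis using a by simp
  qed
  then show ?thesis using True by (simp add: fext_def)
next
  case False
  then have t0: "t = 0" using t by simp
  define g where "g s = f s - d1 * (s - 1)" for s
  have gnn: "g s \<ge> 0" if "s > 0" for s
    using tangent_pos[OF cv _ D1 that] f1 by (simp add: g_def)
  have gmono: "g u \<le> g s" if "0 < s" "s < u" "u < 1" for s u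
  proof -
    define l where "l = (u - s) / (1 - s)"
    have l0: "0 \<le> l" "l \<le> 1" using that by (auto simp: l_def field_simps)
    have lh: "l * (1 - s) = u - s" using that by (simp add: l_def)
    have "(1 - l) * s + l * 1 = s + l * (1 - s)" by algebra
    then have u: "u = (1 - l) *\<^sub>R s + l *\<^sub>R 1" using lh by simp
    have "f u \<le> (1 - l) * f s + l * f 1"
      using convex_onD[OF cv l0] that by (metis greaterThan_iff u zero_less_one)
    then have "f u \<le> (1 - l) * f s" using f1 by simp
    moreover have "u - 1 = (1 - l) * (s - 1)" using that by (simp add: l_def field_simps)
    then have e: "d1 * (u - 1) = (1 - l) * (d1 * (s - 1))" by (simp add: mult_ac)
    ultimately have "g u \<le> (1 - l) * g s" unfolding g_def by (simp add: right_diff_distrib)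
    also have "\<dots> \<le> g s" using l0 gnn[OF that(1)] by (simp add: mult_left_le_one_le)
    finally show ?thesis .
  qed
  define S where "S = (SUP s\<in>{0<..<1::real}. ereal (g s))"
  have lim1: "((\<lambda>s. ereal (g s)) \<longlongrightarrow> S) (at_right 0)"
  proof (rule order_tendstoI)
    fix a assume "a < S"
    then obtain s0 where s0: "s0 \<in> {0<..<1}" "a < ereal (g s0)" unfolding S_def less_SUP_iff by blast
    show "\<forall>\<^sub>F s in at_right 0. a < ereal (g s)"
      unfolding eventually_at_right_field
    proof (intro exI[of _ s0] conjI allI impI)
      show "0 < s0" using s0 by simp
      fix s :: real assume "0 < s" "s < s0"
      then have "g s0 \<le> g s" using gmono[of s s0] s0 by simp
      then show "a < ereal (g s)" using s0 by (meson ereal_less_eq(3) less_le_trans)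
    qed
  next
    fix a assume "S < a"
    show "\<forall>\<^sub>F s in at_right 0. ereal (g s) < a"
      unfolding eventually_at_right_field
    proof (intro exI[of _ 1] conjI allI impI)
      fix s :: real assume "0 < s" "s < 1"
      then have "ereal (g s) \<le> S" unfolding S_def by (intro SUP_upper) auto
      then show "ereal (g s) < a" using \<open>S < a\<close> by simp
    qed simp
  qed
  have lim2: "((\<lambda>s. ereal (d1 * (s - 1))) \<longlongrightarrow> ereal (d1 * (0 - 1))) (at_right 0)"
    by (intro tendsto_intros)
  have lim: "((\<lambda>s. ereal (f s)) \<longlongrightarrow> S + ereal (d1 * (0 - 1))) (at_right 0)"
  proof -
    have "((\<lambda>s. ereal (g s) + ereal (d1 * (s - 1))) \<longlongrightarrow> S + ereal (d1 * (0 - 1))) (at_right 0)"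
      by (rule tendsto_add_ereal_general1[OF _ lim1 lim2]) simp
    then show ?thesis by (simp add: g_def)
  qed
  have L: "Lim (at_right 0) (\<lambda>s. ereal (f s)) = S + ereal (d1 * (0 - 1))"
    by (rule tendsto_Lim[OF _ lim]) simp
  have "S \<ge> 0"
  proof -
    have "ereal (g (1/2)) \<le> S" unfolding S_def by (intro SUP_upper) auto
    moreover have "g (1/2) \<ge> 0" by (rule gnn) simp
    ultimately show ?thesis by (metis order_trans zero_ereal_def ereal_less_eq(3))
  qed
  then have "S + ereal (d1 * (0 - 1)) \<ge> ereal (d1 * (0 - 1))"
    by (metis add.commute add_increasing2 order_refl)
  then show ?thesis using t0 L g1 by (simp add: fext_def)
qed


theorem mainTheorem7:
  fixes P Q :: "'a measure" and f :: "real \<Rightarrow> real" and \<gamma> d1 d\<gamma> :: real and E :: "'a set"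
  assumes "prob_space P" and "prob_space Q"
    and "sets P = sets Q"
    and "absolutely_continuous Q P"
    and "\<gamma> > 1"
    and "convex_on {0<..} f"
    and "f 1 = 0"
    and "(f has_real_derivative d1) (at 1)"
    and "(f has_real_derivative d\<gamma>) (at \<gamma>)"
    and "d\<gamma> > d1"
    and "E \<in> sets P"
  shows "ereal (measure P E) \<le> ereal (\<gamma> * measure Q E) + fdiv f P Q / ereal (d\<gamma> - d1)"
proof -
  interpret Q: prob_space Q by fact
  interpret P: prob_space P by fact
  define N where "N = RN_deriv Q P"
  define r where "r x = enn2real (N x)" for x
  define c where "c = d\<gamma> - d1"
  have c0: "c > 0" using assms(10) by (simp add: c_def)
  have Nm[measurable]: "N \<in> borel_measurable Q" unfolding N_def by simp
  have rm[measurable]: "r \<in> borel_measurable Q" unfolding r_def by simp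
  have r0: "r x \<ge> 0" for x by (simp add: r_def)
  have sfP: "sigma_finite_measure P" by unfold_locales
  have fin: "AE x in Q. N x \<noteq> \<infinity>"
    unfolding N_def using Q.RN_deriv_finite[OF sfP assms(4,3)] .
  have dens: "density Q N = P" unfolding N_def using Q.density_RN_deriv[OF assms(4,3)] .
  have dens2: "density Q (\<lambda>x. ennreal (r x)) = P"
  proof -
    have "density Q (\<lambda>x. ennreal (r x)) = density Q N"
      by (rule density_cong) (use fin in \<open>auto simp: r_def less_top\<close>)
    then show ?thesis using dens by simp
  qed
  have spc: "space P = space Q" using assms(3) by (rule sets_eq_imp_space_eq)
  have ind: "integrable Q (\<lambda>x. r x * indicator A x) \<and> measure P A = (\<integral>x. r x * indicator A x \<partial>Q)"
    if A: "A \<in> sets Q" for A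
  proof -
    have Am[measurable]: "A \<in> sets Q" by fact
    have AP: "A \<in> sets P" using A assms(3) by simp
    have "integrable P (indicator A :: 'a \<Rightarrow> real)"
      by (rule integrable_real_indicator[OF AP]) (simp add: less_top[symmetric])
    then have "integrable (density Q (\<lambda>x. ennreal (r x))) (indicator A :: 'a \<Rightarrow> real)" using dens2 by simp
    then have "integrable Q (\<lambda>x. r x *\<^sub>R (indicator A x :: real))"
      by (subst (asm) integrable_density) (auto simp: r0)
    moreover have "(\<integral>x. (indicator A x :: real) \<partial>density Q (\<lambda>x. ennreal (r x))) = (\<integral>x. r x *\<^sub>R (indicator A x :: real) \<partial>Q)"
      by (rule integral_density) (auto simp: r0)
    moreover have "A \<inter> space P = A" using AP sets.sets_into_space by blast
    ultimately show ?thesis using dens2 by simp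
  qed
  have intr: "integrable Q r" and intr1: "(\<integral>x. r x \<partial>Q) = 1"
  proof -
    have h: "integrable Q (\<lambda>x. r x * indicator (space Q) x) \<and> measure P (space Q) = (\<integral>x. r x * indicator (space Q) x \<partial>Q)"
      by (rule ind) simp
    have eq: "\<And>x. x \<in> space Q \<Longrightarrow> r x * indicator (space Q) x = r x" by simp
    have e1: "integrable Q (\<lambda>x. r x * indicator (space Q) x) = integrable Q r"
      by (rule Bochner_Integration.integrable_cong) auto
    have e2: "(\<integral>x. r x * indicator (space Q) x \<partial>Q) = (\<integral>x. r x \<partial>Q)"
      by (rule Bochner_Integration.integral_cong) auto
    show "integrable Q r" using h e1 by blast
    show "(\<integral>x. r x \<partial>Q) = 1" using h e2 spc P.prob_space by simp
  qed
  have hE: "integrable Q (\<lambda>x. r x * indicator E x)" "measure P E = (\<integral>x. r x * indicator E x \<partial>Q)"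
    using ind[of E] assms(11,3) by auto
  have EQ: "E \<in> sets Q" using assms(11,3) by simp
  have iE: "integrable Q (indicator E :: _ \<Rightarrow> real)"
    by (rule integrable_real_indicator[OF EQ]) (simp add: less_top[symmetric])
  have iC: "integrable Q (\<lambda>x. a :: real)" for a by simp
  define M where "M = (\<integral>x. max 0 (r x - \<gamma>) \<partial>Q)"
  have intM: "integrable Q (\<lambda>x. max 0 (r x - \<gamma>))" using intr by auto
  have intE2: "integrable Q (\<lambda>x. (r x - \<gamma>) * indicator E x)"
  proof -
    have "integrable Q (\<lambda>x. r x * indicator E x - \<gamma> * indicator E x)"
      using hE(1) iE by auto
    then show ?thesis by (simp add: left_diff_distrib)
  qed
  have "(\<integral>x. (r x - \<gamma>) * indicator E x \<partial>Q) = measure P E - \<gamma> * measure Q E"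
  proof -
    have "(\<integral>x. (r x - \<gamma>) * indicator E x \<partial>Q) = (\<integral>x. r x * indicator E x - \<gamma> * indicator E x \<partial>Q)"
      by (simp add: left_diff_distrib)
    also have "\<dots> = (\<integral>x. r x * indicator E x \<partial>Q) - (\<integral>x. \<gamma> * indicator E x \<partial>Q)"
      using hE(1) iE by auto
    also have "\<dots> = measure P E - \<gamma> * measure Q E" using hE(2) EQ by simp
    finally show ?thesis .
  qed
  moreover have "(\<integral>x. (r x - \<gamma>) * indicator E x \<partial>Q) \<le> M"
    unfolding M_def by (intro integral_mono intE2 intM) (auto split: split_indicator)
  ultimately have ME: "measure P E - \<gamma> * measure Q E \<le> M" by simp
  define \<phi> where "\<phi> t = d1 * (t - 1) + c * max 0 (t - \<gamma>)" for t
  have intphi: "integrable Q (\<lambda>x. \<phi> (r x))"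
    unfolding \<phi>_def using intr intM iC by auto
  have Iphi: "(\<integral>x. \<phi> (r x) \<partial>Q) = c * M"
  proof -
    have "(\<integral>x. \<phi> (r x) \<partial>Q) = (\<integral>x. d1 * (r x - 1) \<partial>Q) + (\<integral>x. c * max 0 (r x - \<gamma>) \<partial>Q)"
      unfolding \<phi>_def using intr intM iC by auto
    also have "(\<integral>x. d1 * (r x - 1) \<partial>Q) = d1 * ((\<integral>x. r x \<partial>Q) - 1)"
      using intr by (simp add: integral_diff Q.prob_space)
    finally show ?thesis using intr1 by (simp add: M_def)
  qed
  define h where "h x = fext f (r x)" for x
  have hb: "h x \<ge> ereal (\<phi> (r x))" for x
    unfolding h_def \<phi>_def c_def using pointwise_bound[OF assms(6,5,7,8,9) r0] .
  have A: "(\<integral>\<^sup>+ x. ennreal (\<phi> (r x)) \<partial>Q) \<le> (\<integral>\<^sup>+ x. e2ennreal (h x) \<partial>Q)"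
    by (intro nn_integral_mono) (metis e2ennreal_ereal e2ennreal_mono hb)
  have B: "(\<integral>\<^sup>+ x. e2ennreal (- h x) \<partial>Q) \<le> (\<integral>\<^sup>+ x. ennreal (- \<phi> (r x)) \<partial>Q)"
  proof (intro nn_integral_mono)
    fix x
    have "- h x \<le> ereal (- \<phi> (r x))" using hb[of x] by (metis ereal_minus_le_minus uminus_ereal.simps(1))
    then show "e2ennreal (- h x) \<le> ennreal (- \<phi> (r x))" by (metis e2ennreal_ereal e2ennreal_mono)
  qed
  have fdivE: "fdiv f P Q = enn2ereal (\<integral>\<^sup>+ x. e2ennreal (h x) \<partial>Q) - enn2ereal (\<integral>\<^sup>+ x. e2ennreal (- h x) \<partial>Q)"
    unfolding fdiv_def h_def N_def r_def by simp
  have "enn2ereal (\<integral>\<^sup>+ x. ennreal (\<phi> (r x)) \<partial>Q) - enn2ereal (\<integral>\<^sup>+ x. ennreal (- \<phi> (r x)) \<partial>Q) \<le> fdiv f P Q"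
    unfolding fdivE by (intro ereal_minus_mono) (use A B in \<open>simp_all add: less_eq_ennreal.rep_eq[symmetric]\<close>)
  moreover have "enn2ereal (\<integral>\<^sup>+ x. ennreal (\<phi> (r x)) \<partial>Q) - enn2ereal (\<integral>\<^sup>+ x. ennreal (- \<phi> (r x)) \<partial>Q) = ereal (\<integral>x. \<phi> (r x) \<partial>Q)"
  proof -
    have f1: "(\<integral>\<^sup>+ x. ennreal (\<phi> (r x)) \<partial>Q) \<noteq> \<infinity>" "(\<integral>\<^sup>+ x. ennreal (- \<phi> (r x)) \<partial>Q) \<noteq> \<infinity>"
      using intphi unfolding real_integrable_def by auto
    obtain a where a: "(\<integral>\<^sup>+ x. ennreal (\<phi> (r x)) \<partial>Q) = ennreal a" "a \<ge> 0"
      using f1(1) by (cases "(\<integral>\<^sup>+ x. ennreal (\<phi> (r x)) \<partial>Q)") auto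
    obtain b where b: "(\<integral>\<^sup>+ x. ennreal (- \<phi> (r x)) \<partial>Q) = ennreal b" "b \<ge> 0"
      using f1(2) by (cases "(\<integral>\<^sup>+ x. ennreal (- \<phi> (r x)) \<partial>Q)") auto
    show ?thesis
      unfolding real_lebesgue_integral_def[OF intphi] a b using a(2) b(2) by simp
  qed
  ultimately have DI: "ereal (c * M) \<le> fdiv f P Q" using Iphi by simp
  show ?thesis
  proof (cases "fdiv f P Q")
    case (real d)
    then have "c * M \<le> d" using DI by simp
    then have "M \<le> d / c" using c0 by (simp add: field_simps)
    then show ?thesis using real ME c0 by (simp add: c_def[symmetric])
  next
    case PInf
    then show ?thesis using c0 by (simp add: c_def[symmetric])
  next
    case MInf
    then show ?thesis using DI by simp
  qed
qed

end
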